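(* Let $V,W$ be finite-dimensional Hermitian vector spaces, $\tilde W=V\oplus V\oplus W$, and $B_1,B_2\in\mathrm{End}(V)$, $i\in\mathrm{Hom}(W,V)$, $j\in\mathrm{Hom}(V,W)$. Define right $\mathfrak{M}^{\rm I}_q$-linear maps $\alpha_{\rm I}:V\otimes\mathfrak{M}^{\rm I}_q\to\tilde W\otimes\mathfrak{M}^{\rm I}_q$, $\beta_{\rm I}:\tilde W\otimes\mathfrak{M}^{\rm I}_q\to V\otimes\mathfrak{M}^{\rm I}_q$ by $$\alpha_{\rm I}=\begin{pmatrix}B_1\otimes 1-1\otimes x_{21'}\\ B_2\otimes1-1\otimes x_{22'}\\ j\otimes 1\end{pmatrix},\qquad \beta_{\rm I}=\begin{pmatrix}-B_2\otimes1+1\otimes x_{22'} & B_1\otimes1-1\otimes x_{21'} & i\otimes1\end{pmatrix},$$ and their adjoints $$\beta_{\rm I}^\dagger=\begin{pmatrix}-B_2^\dagger\otimes1+1\otimes x_{11'}\\ B_1^\dagger\otimes1+1\otimes x_{12'}\\ i^\dagger\otimes1\end{pmatrix},\qquad \alpha_{\rm I}^\dagger=\begin{pmatrix}B_1^\dagger\otimes1+1\otimes x_{12'} & B_2^\dagger\otimes1-1\otimes x_{11'} & j^\dagger\otimes1\end{pmatrix}.$$ Then (1) $\beta_{\rm I}\alpha_{\rm I}=0$ if and only if $[B_1,B_2]+ij=0$; (2) $\beta_{\rm I}\beta_{\rm I}^\dagger=\alpha_{\rm I}^\dagger\alpha_{\rm I}$ if and only if $[B_1,B_1^\dagger]+[B_2,B_2^\dagger]+ii^\dagger-j^\dagger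 j=0$.
   Context: $q$ is a nonzero complex (e.g. positive real) parameter. $\mathfrak{M}^{\rm I}_q$ is the algebra generated by $x_{11'},x_{12'},x_{21'},x_{22'}$ subject to $x_{11'}x_{12'}=x_{12'}x_{11'}$, $x_{21'}x_{22'}=x_{22'}x_{21'}$, $[x_{11'},x_{22'}]+[x_{21'},x_{12'}]=0$, $x_{11'}x_{21'}=q^{-2}x_{21'}x_{11'}$, $x_{12'}x_{22'}=q^{-2}x_{22'}x_{12'}$, $x_{21'}x_{12'}=q^2x_{12'}x_{21'}$ (realized inside $\widetilde{SL}(2)_q$ as $x_{11'}=\delta g_{11'}$, $x_{12'}=q^{-1/2}\delta g_{12'}$, $x_{21'}=q^{1/2}\delta g_{21'}$, $x_{22'}=\delta g_{22'}$). For a finite-dimensional vector space $U$, $U\otimes\mathfrak{M}^{\rm I}_q$ is a free right $\mathfrak{M}^{\rm I}_q$-module; for linear maps $A:U_1\to U_2$ and $x\in\mathfrak{M}^{\rm I}_q$, $A\otimes x$ denotes the right-linear map $v\otimes f\mapsto Av\otimes xf$. Block matrices act in the obvious way, and $\dagger$ on $B_k,i,j$ is the Hermitian adjoint. *)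

theory Defs
  imports "HOL-Analysis.Analysis" "HOL-Library.Poly_Mapping"
begin

datatype gen = X11 | X12 | X21 | X22

text \<open>Words in the generators (free monoid, concatenation written as +).\<close>
datatype word = Word "gen list"

instantiation word :: monoid_add
begin
definition zero_word :: word where "zero_word = Word []"
fun plus_word :: "word \<Rightarrow> word \<Rightarrow> word" where
  "plus_word (Word u) (Word v) = Word (u @ v)"
instance
proof
  fix a b c :: word
  show "a + b + c = a + (b + c)" by (cases a; cases b; cases c) simp
  show "0 + a = a" by (cases a) (simp add: zero_word_def)
  show "a + 0 = a" by (cases a) (simp add: zero_word_def)
qed
end

text \<open>The free associative complex algebra on the four generators
  (noncommutative polynomials; multiplication is convolution over word concatenation).\<close>
type_synonym freealg = "word \<Rightarrow>\<^sub>0 complex"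

definition sc :: "complex \<Rightarrow> freealg" where
  "sc c = Poly_Mapping.single 0 c"

definition xg :: "gen \<Rightarrow> freealg" where
  "xg g = Poly_Mapping.single (Word [g]) 1"

text \<open>The defining relations of M^I_q, written as elements (lhs - rhs) of the free algebra.\<close>
definition MI_rels :: "complex \<Rightarrow> freealg set" where
  "MI_rels q = {
     xg X11 * xg X12 - xg X12 * xg X11,
     xg X21 * xg X22 - xg X22 * xg X21,
     (xg X11 * xg X22 - xg X22 * xg X11) + (xg X21 * xg X12 - xg X12 * xg X21),
     xg X11 * xg X21 - sc (inverse (q^2)) * xg X21 * xg X11,
     xg X12 * xg X22 - sc (inverse (q^2)) * xg X22 * xg X12,
     xg X21 * xg X12 - sc (q^2) * xg X12 * xg X21 }"

text \<open>The two-sided ideal generated by the relations; M^I_q = freealg / MI_ideal q.\<close>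
inductive_set MI_ideal :: "complex \<Rightarrow> freealg set" for q :: complex where
  gen_rel: "r \<in> MI_rels q \<Longrightarrow> r \<in> MI_ideal q"
| zero: "0 \<in> MI_ideal q"
| add: "a \<in> MI_ideal q \<Longrightarrow> b \<in> MI_ideal q \<Longrightarrow> a + b \<in> MI_ideal q"
| lmult: "a \<in> MI_ideal q \<Longrightarrow> c * a \<in> MI_ideal q"
| rmult: "a \<in> MI_ideal q \<Longrightarrow> a * c \<in> MI_ideal q"

text \<open>A right M-linear map between free modules C^a \<otimes> M and C^b \<otimes> M is a b\<times>a matrix
  with entries in M acting by left multiplication; composition is the matrix product.
  We represent entries by representatives in the free algebra; equality of two such
  maps in M^I_q means entrywise congruence modulo the ideal.\<close>
definition Meq :: "complex \<Rightarrow> freealg^'c^'r \<Rightarrow> freealg^'c^'r \<Rightarrow> bool" where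
  "Meq q P Q \<longleftrightarrow> (\<forall>k l. P$k$l - Q$k$l \<in> MI_ideal q)"

definition tens1 :: "complex^'c^'r \<Rightarrow> freealg^'c^'r" where
  "tens1 A = (\<chi> k l. sc (A$k$l))"

definition one_tens :: "freealg \<Rightarrow> freealg^'n^'n" where
  "one_tens x = (\<chi> k l. if k = l then x else 0)"

text \<open>Hermitian adjoint (conjugate transpose w.r.t. orthonormal bases).\<close>
definition adj :: "complex^'c^'r \<Rightarrow> complex^'r^'c" where
  "adj A = (\<chi> k l. cnj (A$l$k))"

text \<open>Index type of \<tilde>W = V \<oplus> V \<oplus> W is ('n + 'n) + 'm.\<close>

definition alphaI :: "complex^'n^'n \<Rightarrow> complex^'n^'n \<Rightarrow> complex^'n^'m
    \<Rightarrow> freealg^'n^(('n + 'n) + 'm)" where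
  "alphaI B1 B2 j = (\<chi> r. case r of
      Inl (Inl k) \<Rightarrow> (tens1 B1 - one_tens (xg X21))$k
    | Inl (Inr k) \<Rightarrow> (tens1 B2 - one_tens (xg X22))$k
    | Inr k \<Rightarrow> (tens1 j)$k)"

definition betaI :: "complex^'n^'n \<Rightarrow> complex^'n^'n \<Rightarrow> complex^'m^'n
    \<Rightarrow> freealg^(('n + 'n) + 'm)^'n" where
  "betaI B1 B2 i = (\<chi> k r. case r of
      Inl (Inl l) \<Rightarrow> (- tens1 B2 + one_tens (xg X22))$k$l
    | Inl (Inr l) \<Rightarrow> (tens1 B1 - one_tens (xg X21))$k$l
    | Inr l \<Rightarrow> (tens1 i)$k$l)"

definition betaI_dag :: "complex^'n^'n \<Rightarrow> complex^'n^'n \<Rightarrow> complex^'m^'n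
    \<Rightarrow> freealg^'n^(('n + 'n) + 'm)" where
  "betaI_dag B1 B2 i = (\<chi> r. case r of
      Inl (Inl k) \<Rightarrow> (- tens1 (adj B2) + one_tens (xg X11))$k
    | Inl (Inr k) \<Rightarrow> (tens1 (adj B1) + one_tens (xg X12))$k
    | Inr k \<Rightarrow> (tens1 (adj i))$k)"

definition alphaI_dag :: "complex^'n^'n \<Rightarrow> complex^'n^'n \<Rightarrow> complex^'n^'m
    \<Rightarrow> freealg^(('n + 'n) + 'm)^'n" where
  "alphaI_dag B1 B2 j = (\<chi> k r. case r of
      Inl (Inl l) \<Rightarrow> (tens1 (adj B1) + one_tens (xg X12))$k$l
    | Inl (Inr l) \<Rightarrow> (tens1 (adj B2) - one_tens (xg X11))$k$l
    | Inr l \<Rightarrow> (tens1 (adj j))$k$l)"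

end

theory Submission
  imports Defs
begin

lemma sc_mult: "sc (a*b) = sc a * sc b"
  by (simp add: sc_def mult_single)
lemma sc_add: "sc (a+b) = sc a + sc b"
  by (simp add: sc_def single_add)
lemma sc_uminus: "sc (-a) = - sc a"
  by (simp add: sc_def single_uminus)
lemma sc_diff: "sc (a-b) = sc a - sc b"
  by (simp add: sc_def single_diff)
lemma sc_0: "sc 0 = 0" by (simp add: sc_def)
lemma sc_sum: "sc (sum f A) = (\<Sum>x\<in>A. sc (f x))"
  by (induction A rule: infinite_finite_induct) (auto simp: sc_0 sc_add)
lemma sc_comm: "xg g * sc c = sc c * xg g"
  by (simp add: sc_def xg_def mult_single)

lemma sc_inj0: "sc c = 0 \<longleftrightarrow> c = 0"
  by (metis lookup_single_eq lookup_zero sc_0 sc_def)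

lemma word_add_eq_0: "(u::word) + v = 0 \<longleftrightarrow> u = 0 \<and> v = 0"
  by (cases u; cases v) (simp add: zero_word_def)

lemma lookup_mult0:
  fixes a b :: freealg
  shows "Poly_Mapping.lookup (a * b) 0 = Poly_Mapping.lookup a 0 * Poly_Mapping.lookup b 0"
proof -
  have "Poly_Mapping.lookup (a * b) 0 = (\<Sum>l. Poly_Mapping.lookup a l * ((Poly_Mapping.lookup b 0::complex) when (l::word) = 0))"
    unfolding Poly_Mapping.lookup_mult
    by (rule Sum_any.cong) (simp add: word_add_eq_0 when_def eq_commute[of 0])
  also have "\<dots> = (\<Sum>l. (Poly_Mapping.lookup a l * Poly_Mapping.lookup b 0::complex) when (l::word) = 0)"
    by (rule Sum_any.cong) (simp add: when_def)
  also have "\<dots> = Poly_Mapping.lookup a 0 * Poly_Mapping.lookup b 0" by simp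
  finally show ?thesis .
qed

lemma xg0: "Poly_Mapping.lookup (xg g) 0 = 0"
  by (simp add: xg_def lookup_single zero_word_def when_def)
lemma sc0: "Poly_Mapping.lookup (sc c) 0 = c"
  by (simp add: sc_def lookup_single when_def)

lemma ideal_const0: "p \<in> MI_ideal q \<Longrightarrow> Poly_Mapping.lookup p 0 = 0"
proof (induction rule: MI_ideal.induct)
  case (gen_rel r)
  then show ?case
    by (auto simp: MI_rels_def lookup_mult0 lookup_minus lookup_add xg0 sc0)
qed (auto simp: lookup_mult0 lookup_add)

lemma sc_ideal: "sc c \<in> MI_ideal q \<longleftrightarrow> c = 0"
  using ideal_const0[of "sc c" q] sc0[of c] by (auto simp: sc_0 intro: MI_ideal.zero)

lemma ideal_uminus: "a \<in> MI_ideal q \<Longrightarrow> - a \<in> MI_ideal q"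
  using MI_ideal.lmult[of a q "-1"] by simp
lemma ideal_diff: "a \<in> MI_ideal q \<Longrightarrow> b \<in> MI_ideal q \<Longrightarrow> a - b \<in> MI_ideal q"
  using MI_ideal.add[OF _ ideal_uminus[of b]] by (simp add: MI_ideal.add ideal_uminus)

lemma sum_UNIV_plus: "sum f (UNIV :: ('a::finite + 'b::finite) set) = sum (\<lambda>x. f (Inl x)) UNIV + sum (\<lambda>x. f (Inr x)) UNIV"
proof -
  have "sum f (UNIV <+> UNIV :: ('a + 'b) set) = sum (f \<circ> Inl) UNIV + sum (f \<circ> Inr) UNIV"
    by (rule sum.Plus) auto
  then show ?thesis by (simp add: comp_def)
qed


lemma mm_add_l: "(A::'a::ring_1^'n::finite^'m) ** (B + C) = A ** B + A ** C"
  by (simp add: matrix_matrix_mult_def vec_eq_iff ring_distribs sum.distrib)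
lemma mm_add_r: "((A::'a::ring_1^'n::finite^'m) + B) ** (C::'a^'k^'n) = A ** C + B ** C"
  by (simp add: matrix_matrix_mult_def vec_eq_iff ring_distribs sum.distrib)
lemma mm_diff_l: "(A::'a::ring_1^'n::finite^'m) ** (B - C) = A ** B - A ** C"
  by (simp add: matrix_matrix_mult_def vec_eq_iff ring_distribs sum_subtractf)
lemma mm_diff_r: "((A::'a::ring_1^'n::finite^'m) - B) ** (C::'a^'k^'n) = A ** C - B ** C"
  by (simp add: matrix_matrix_mult_def vec_eq_iff ring_distribs sum_subtractf)
lemma mm_neg_l: "(- (A::'a::ring_1^'n::finite^'m)) ** (C::'a^'k^'n) = - (A ** C)"
  by (simp add: matrix_matrix_mult_def vec_eq_iff sum_negf)

definition smat :: "complex^'c^'r \<Rightarrow> freealg \<Rightarrow> freealg^'c^'r" where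
  "smat A x = (\<chi> k l. sc (A$k$l) * x)"

lemma tt: "tens1 (A::complex^'n::finite^'m) ** tens1 (B::complex^'k^'n) = tens1 (A ** B)"
  by (simp add: matrix_matrix_mult_def tens1_def vec_eq_iff sc_sum sc_mult)
lemma to: "tens1 (A::complex^'n::finite^'m) ** one_tens x = smat A x"
  by (simp add: matrix_matrix_mult_def tens1_def one_tens_def smat_def vec_eq_iff if_distrib[where f="\<lambda>y. _ * y"] cong: if_cong)
lemma ot: "one_tens (xg g) ** tens1 (A::complex^'n::finite^'m) = smat A (xg g)"
  by (simp add: matrix_matrix_mult_def tens1_def one_tens_def smat_def vec_eq_iff if_distrib[where f="\<lambda>y. y * _"] sc_comm cong: if_cong)
lemma oo: "one_tens x ** (one_tens y :: freealg^'n::finite^'n) = one_tens (x * y)"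
  by (simp add: matrix_matrix_mult_def one_tens_def vec_eq_iff if_distrib[where f="\<lambda>y. y * _"] cong: if_cong)

lemma hv: "(\<chi> k r. case r of Inl (Inl l) \<Rightarrow> (P::freealg^'n::finite^'k)$k$l | Inl (Inr l) \<Rightarrow> (Q::freealg^'n^'k)$k$l | Inr l \<Rightarrow> (R::freealg^'m::finite^'k)$k$l)
   ** (\<chi> r. case r of Inl (Inl k) \<Rightarrow> (P'::freealg^'c^'n)$k | Inl (Inr k) \<Rightarrow> (Q'::freealg^'c^'n)$k | Inr k \<Rightarrow> (R'::freealg^'c^'m)$k)
   = P ** P' + Q ** Q' + R ** R'"
  by (simp add: matrix_matrix_mult_def vec_eq_iff sum_UNIV_plus)

lemma entry1:
  fixes B1 B2 :: "complex^'n::finite^'n" and i :: "complex^'m::finite^'n" and j :: "complex^'n^'m"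
  shows "(betaI B1 B2 i ** alphaI B1 B2 j)$k$l = sc ((B1 ** B2 - B2 ** B1 + i ** j)$k$l)
     + (if k = l then xg X21 * xg X22 - xg X22 * xg X21 else 0)"
  unfolding betaI_def alphaI_def hv
  apply (simp add: mm_add_l mm_add_r mm_diff_l mm_diff_r mm_neg_l tt to ot oo)
  apply (simp add: tens1_def one_tens_def sc_add sc_diff)
  done

lemma entry2:
  fixes B1 B2 :: "complex^'n::finite^'n" and i :: "complex^'m::finite^'n" and j :: "complex^'n^'m"
  shows "(betaI B1 B2 i ** betaI_dag B1 B2 i)$k$l - (alphaI_dag B1 B2 j ** alphaI B1 B2 j)$k$l
     = sc (((B1 ** adj B1 - adj B1 ** B1) + (B2 ** adj B2 - adj B2 ** B2) + i ** adj i - adj j ** j)$k$l)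
     + (if k = l then xg X22 * xg X11 - xg X21 * xg X12 + xg X12 * xg X21 - xg X11 * xg X22 else 0)"
  unfolding betaI_def alphaI_def betaI_dag_def alphaI_dag_def hv
  apply (simp add: mm_add_l mm_add_r mm_diff_l mm_diff_r mm_neg_l tt to ot oo)
  apply (simp add: tens1_def one_tens_def sc_add sc_diff smat_def)
  done

lemma gen_iff:
  fixes C :: "complex^'r^'r"
  assumes r: "r \<in> MI_ideal q"
  shows "(\<forall>k l. sc (C$k$l) + (if k = l then r else 0) \<in> MI_ideal q) \<longleftrightarrow> C = 0"
proof
  assume H: "\<forall>k l. sc (C$k$l) + (if k = l then r else 0) \<in> MI_ideal q"
  have "C$k$l = 0" for k l
  proof -
    have "sc (C$k$l) + (if k = l then r else 0) - (if k = l then r else 0) \<in> MI_ideal q"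
      using H r by (intro ideal_diff) (auto intro: MI_ideal.zero)
    then show ?thesis by (simp add: sc_ideal)
  qed
  then show "C = 0" by (simp add: vec_eq_iff)
next
  assume "C = 0"
  then show "\<forall>k l. sc (C$k$l) + (if k = l then r else 0) \<in> MI_ideal q"
    using r by (auto simp: sc_0 intro: MI_ideal.zero)
qed

theorem proposition3p8:
  fixes q :: complex
    and B1 B2 :: "complex^'n::finite^'n"
    and i :: "complex^'m::finite^'n"
    and j :: "complex^'n^'m"
  assumes "q \<noteq> 0"
  shows "(Meq q (betaI B1 B2 i ** alphaI B1 B2 j) 0
            \<longleftrightarrow> B1 ** B2 - B2 ** B1 + i ** j = 0)
       \<and> (Meq q (betaI B1 B2 i ** betaI_dag B1 B2 i) (alphaI_dag B1 B2 j ** alphaI B1 B2 j)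
            \<longleftrightarrow> (B1 ** adj B1 - adj B1 ** B1) + (B2 ** adj B2 - adj B2 ** B2)
                 + i ** adj i - adj j ** j = 0)"
proof
  have r1: "xg X21 * xg X22 - xg X22 * xg X21 \<in> MI_ideal q"
    by (rule MI_ideal.gen_rel) (simp add: MI_rels_def)
  show "Meq q (betaI B1 B2 i ** alphaI B1 B2 j) 0 \<longleftrightarrow> B1 ** B2 - B2 ** B1 + i ** j = 0"
    unfolding Meq_def using gen_iff[OF r1, of "B1 ** B2 - B2 ** B1 + i ** j"]
    by (simp add: entry1)
next
  have "(xg X11 * xg X22 - xg X22 * xg X11) + (xg X21 * xg X12 - xg X12 * xg X21) \<in> MI_ideal q"
    by (rule MI_ideal.gen_rel) (simp add: MI_rels_def)
  from ideal_uminus[OF this]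
  have r2: "xg X22 * xg X11 - xg X21 * xg X12 + xg X12 * xg X21 - xg X11 * xg X22 \<in> MI_ideal q"
    by (simp add: algebra_simps)
  show "Meq q (betaI B1 B2 i ** betaI_dag B1 B2 i) (alphaI_dag B1 B2 j ** alphaI B1 B2 j)
            \<longleftrightarrow> (B1 ** adj B1 - adj B1 ** B1) + (B2 ** adj B2 - adj B2 ** B2)
                 + i ** adj i - adj j ** j = 0"
    unfolding Meq_def entry2 using gen_iff[OF r2] by blast
qed

end
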